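(* Let $k\ge0$ be an integer, let $X_0>1$ be a deterministic real number, and let $X_1,\dots,X_k$ be nonnegative random variables satisfying, for every $0\le i<k$, \[ X_{i+1}-1\ge 2(X_i-1)\qquad\text{and}\qquad \mathbb{E}[X_{i+1}\mid X_0,\dots,X_i]\le X_i^2. \] If $\tau\ge 1+4(X_0-1)$, then \[ \Pr\left[X_k\ge\tau^{2^k}\right]\le 48\left(\frac{X_0-1}{\tau-1}\right)^2. \] *)

theory Defs
  imports "HOL-Probability.Probability"
begin

definition gen_sigma :: "'a measure \<Rightarrow> (nat \<Rightarrow> 'a \<Rightarrow> real) \<Rightarrow> nat \<Rightarrow> 'a measure" where
  "gen_sigma M X i =
     sigma (space M) (\<Union>j\<in>{..i}. {X j -` A \<inter> space M | A. A \<in> sets borel})"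

end

theory Submission
  imports Defs
begin

lemma key:
  fixes A u v :: real
  assumes A: "A > 0" and u: "u \<ge> 0" and v: "v \<ge> 2*u"
  defines "B \<equiv> A*(A+2)"
  defines "l \<equiv> (if u < A then (B + 2*u)/B^2 else 0)"
  shows "min 1 ((v/B)^2) + l*(1+u)^2 \<le> min 1 ((u/A)^2) + l*(1+v)"
proof (cases "u < A")
  case False
  then have "(u/A)^2 \<ge> 1" using A by (simp add: power_le_one_iff)
  then show ?thesis using False l_def by simp
next
  case True
  have B: "B > 0" using A B_def by simp
  have l: "l = (B + 2*u)/B^2" using True l_def by simp
  have h1: "4*u^2/B^2 + l*u^2 \<le> (u/A)^2"
  proof -
    have "4 + B + 2*u \<le> (A+2)^2" using True B_def by (simp add: power2_eq_square algebra_simps)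
    then have "(4 + B + 2*u) * u^2 \<le> (A+2)^2 * u^2" by (simp add: mult_right_mono)
    then have "(4 + B + 2*u) * u^2 / B^2 \<le> (A+2)^2 * u^2 / B^2" using B by (simp add: divide_right_mono)
    also have "(A+2)^2 * u^2 / B^2 = (u/A)^2"
    proof -
      have "B^2 = A^2*(A+2)^2" by (simp add: B_def power_mult_distrib)
      moreover have "(A+2)^2 > 0" using A by simp
      ultimately show ?thesis using A by (simp add: power_divide)
    qed
    moreover have "4*u^2/B^2 + l*u^2 = (4 + B + 2*u) * u^2 / B^2"
    proof -
      have "(4 + B + 2*u) * u^2 / B^2 = 4*u^2/B^2 + ((B + 2*u)/B^2)*u^2" using B by (simp add: field_simps)
      then show ?thesis using l by simp
    qed
    ultimately show ?thesis by simp
  qed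
  have h2: "min 1 ((v/B)^2) \<le> 4*u^2/B^2 + l*(v - 2*u)"
  proof (cases "v \<le> B")
    case True
    have "v^2 - 4*u^2 \<le> (B+2*u)*(v-2*u)"
    proof -
      have "v^2 - 4*u^2 = (v+2*u)*(v-2*u)" by (simp add: power2_eq_square algebra_simps)
      also have "\<dots> \<le> (B+2*u)*(v-2*u)" using True v by (intro mult_right_mono) auto
      finally show ?thesis .
    qed
    then have "v^2 \<le> 4*u^2 + (B+2*u)*(v-2*u)" by simp
    then have "v^2/B^2 \<le> (4*u^2 + (B+2*u)*(v-2*u))/B^2" using B by (simp add: divide_right_mono)
    moreover have "4*u^2/B^2 + l*(v - 2*u) = (4*u^2 + (B+2*u)*(v-2*u))/B^2"
      unfolding l times_divide_eq_left by (rule add_divide_distrib[symmetric])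
    ultimately show ?thesis by (simp add: power_divide min.coboundedI2)
  next
    case False
    have "B^2 \<le> 4*u^2 + (B+2*u)*(v-2*u)"
    proof -
      have "(B+2*u)*(B-2*u) \<le> (B+2*u)*(v-2*u)" using False u B by (intro mult_left_mono) auto
      then show ?thesis by (simp add: power2_eq_square algebra_simps)
    qed
    then have "1 \<le> (4*u^2 + (B+2*u)*(v-2*u))/B^2" using B by simp
    moreover have "4*u^2/B^2 + l*(v - 2*u) = (4*u^2 + (B+2*u)*(v-2*u))/B^2"
      unfolding l times_divide_eq_left by (rule add_divide_distrib[symmetric])
    ultimately show ?thesis by (simp add: min.coboundedI1)
  qed
  have "min 1 ((v/B)^2) + l*(1+u)^2 \<le> 4*u^2/B^2 + l*(v - 2*u) + l*(1+u)^2" using h2 by simp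
  also have "\<dots> = 4*u^2/B^2 + l*u^2 + l*(1+v)" by (simp add: power2_eq_square algebra_simps)
  also have "\<dots> \<le> (u/A)^2 + l*(1+v)" using h1 by simp
  finally have fin: "min 1 ((v/B)^2) + l*(1+u)^2 \<le> (u/A)^2 + l*(1+v)" .
  have "u/A \<le> 1" using True A by simp
  then have "(u/A)^2 \<le> 1" using u A by (intro power_le_one) auto
  then show ?thesis using fin by simp
qed

lemma step:
  fixes M F :: "'a measure" and Xi Y :: "'a \<Rightarrow> real" and A :: real
  assumes P: "prob_space M" and S: "subalgebra M F"
    and mXF[measurable]: "Xi \<in> borel_measurable F" and mY[measurable]: "Y \<in> borel_measurable M"
    and X1: "AE \<omega> in M. Xi \<omega> \<ge> 1"
    and XY: "AE \<omega> in M. Y \<omega> - 1 \<ge> 2*(Xi \<omega> - 1)"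
    and CE: "AE \<omega> in M. nn_cond_exp M F (\<lambda>\<omega>. ennreal (Y \<omega>)) \<omega> \<le> ennreal ((Xi \<omega>)^2)"
    and A: "A > 0"
  shows "(\<integral>\<^sup>+\<omega>. ennreal (min 1 (((Y \<omega> - 1)/(A*(A+2)))^2)) \<partial>M)
           \<le> (\<integral>\<^sup>+\<omega>. ennreal (min 1 (((Xi \<omega> - 1)/A)^2)) \<partial>M)"
proof -
  interpret prob_space M by (rule P)
  interpret finite_measure_subalgebra M F by unfold_locales (rule S)
  have mX[measurable]: "Xi \<in> borel_measurable M" by (rule measurable_from_subalg[OF S mXF])
  define B where "B = A*(A+2)"
  have B: "B > 0" using A B_def by simp
  define l where "l x = (if x - 1 < A then (B + 2*(x-1))/B^2 else 0)" for x :: real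
  have ml[measurable]: "l \<in> borel_measurable borel" unfolding l_def by measurable
  define Cst where "Cst = (B + 2*A)/B^2 * (1+A)^2"
  have lbound: "l x * x^2 \<le> Cst" if "x \<ge> 1" for x
  proof (cases "x - 1 < A")
    case True
    have "l x = (B + 2*(x-1))/B^2" using True l_def by simp
    also have "\<dots> \<le> (B + 2*A)/B^2" using True B by (simp add: divide_right_mono)
    finally have h1: "l x \<le> (B + 2*A)/B^2" .
    have h2: "x^2 \<le> (1+A)^2" using True that by (intro power_mono) auto
    have "l x \<ge> 0" using True that B l_def by simp
    then show ?thesis unfolding Cst_def using h1 h2 by (intro mult_mono) auto
  next
    case False
    then show ?thesis unfolding Cst_def l_def using A B by simp
  qed
  have lnn: "l x \<ge> 0" if "x \<ge> 1" for x using that B l_def by simp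
  let ?pY = "\<lambda>\<omega>. ennreal (min 1 (((Y \<omega> - 1)/B)^2))"
  let ?pX = "\<lambda>\<omega>. ennreal (min 1 (((Xi \<omega> - 1)/A)^2))"
  let ?c = "\<lambda>\<omega>. ennreal (l (Xi \<omega>) * (Xi \<omega>)^2)"
  let ?g = "\<lambda>\<omega>. ennreal (l (Xi \<omega>))"
  have pw: "AE \<omega> in M. ?pY \<omega> + ?c \<omega> \<le> ?pX \<omega> + ?g \<omega> * ennreal (Y \<omega>)"
    using X1 XY
  proof eventually_elim
    case (elim \<omega>)
    let ?x = "Xi \<omega>" and ?y = "Y \<omega>"
    have k: "min 1 (((?y-1)/B)^2) + l ?x * (1 + (?x - 1))^2 \<le> min 1 (((?x-1)/A)^2) + l ?x * (1 + (?y - 1))"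
      using key[of A "?x - 1" "?y - 1"] A elim unfolding l_def B_def by simp
    have lx: "l ?x \<ge> 0" using lnn elim by simp
    have y0: "?y \<ge> 0" using elim by simp
    have "?pY \<omega> + ?c \<omega> = ennreal (min 1 (((?y-1)/B)^2) + l ?x * ?x^2)"
      using lx by simp
    also have "\<dots> \<le> ennreal (min 1 (((?x-1)/A)^2) + l ?x * ?y)" using k by (intro ennreal_leI) simp
    also have "\<dots> = ?pX \<omega> + ?g \<omega> * ennreal ?y"
      using lx y0 by (simp add: ennreal_mult)
    finally show ?case .
  qed
  have "(\<integral>\<^sup>+\<omega>. ?pY \<omega> \<partial>M) + (\<integral>\<^sup>+\<omega>. ?c \<omega> \<partial>M) = (\<integral>\<^sup>+\<omega>. ?pY \<omega> + ?c \<omega> \<partial>M)"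
    by (rule nn_integral_add[symmetric]) measurable
  also have "\<dots> \<le> (\<integral>\<^sup>+\<omega>. ?pX \<omega> + ?g \<omega> * ennreal (Y \<omega>) \<partial>M)"
    by (rule nn_integral_mono_AE[OF pw])
  also have "\<dots> = (\<integral>\<^sup>+\<omega>. ?pX \<omega> \<partial>M) + (\<integral>\<^sup>+\<omega>. ?g \<omega> * ennreal (Y \<omega>) \<partial>M)"
    by (rule nn_integral_add) measurable
  also have "(\<integral>\<^sup>+\<omega>. ?g \<omega> * ennreal (Y \<omega>) \<partial>M) = (\<integral>\<^sup>+\<omega>. ?g \<omega> * nn_cond_exp M F (\<lambda>\<omega>. ennreal (Y \<omega>)) \<omega> \<partial>M)"
    by (rule nn_cond_exp_intg[symmetric]) measurable
  also have "\<dots> \<le> (\<integral>\<^sup>+\<omega>. ?c \<omega> \<partial>M)"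
  proof (rule nn_integral_mono_AE)
    show "AE \<omega> in M. ?g \<omega> * nn_cond_exp M F (\<lambda>\<omega>. ennreal (Y \<omega>)) \<omega> \<le> ?c \<omega>"
      using CE X1
    proof eventually_elim
      case (elim \<omega>)
      have "?g \<omega> * nn_cond_exp M F (\<lambda>\<omega>. ennreal (Y \<omega>)) \<omega> \<le> ?g \<omega> * ennreal ((Xi \<omega>)^2)"
        using elim(1) by (rule mult_left_mono) simp
      also have "\<dots> = ?c \<omega>" using lnn elim(2) by (simp add: ennreal_mult)
      finally show ?case .
    qed
  qed
  finally have fin: "(\<integral>\<^sup>+\<omega>. ?c \<omega> \<partial>M) + (\<integral>\<^sup>+\<omega>. ?pY \<omega> \<partial>M) \<le> (\<integral>\<^sup>+\<omega>. ?c \<omega> \<partial>M) + (\<integral>\<^sup>+\<omega>. ?pX \<omega> \<partial>M)"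
    by (simp add: add.commute)
  have "(\<integral>\<^sup>+\<omega>. ?c \<omega> \<partial>M) \<le> (\<integral>\<^sup>+\<omega>. ennreal Cst \<partial>M)"
    using X1 by (intro nn_integral_mono_AE, eventually_elim) (intro ennreal_leI lbound)
  also have "\<dots> = ennreal Cst" by (simp add: emeasure_space_1)
  finally have "(\<integral>\<^sup>+\<omega>. ?c \<omega> \<partial>M) \<noteq> \<infinity>" using top.extremum_uniqueI by fastforce
  then show ?thesis using fin unfolding B_def by (simp add: ennreal_add_left_cancel_le)
qed

lemma gen_sigma_props:
  fixes M :: "'a measure" and X :: "nat \<Rightarrow> 'a \<Rightarrow> real"
  assumes meas: "\<forall>j\<le>i. X j \<in> borel_measurable M"
  shows "subalgebra M (gen_sigma M X i)" and "X i \<in> borel_measurable (gen_sigma M X i)"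
proof -
  define G where "G = (\<Union>j\<in>{..i}. {X j -` A \<inter> space M | A. A \<in> sets borel})"
  have GP: "G \<subseteq> Pow (space M)" unfolding G_def by auto
  have GM: "G \<subseteq> sets M" unfolding G_def using meas by (auto intro: measurable_sets)
  have sp: "space (gen_sigma M X i) = space M" unfolding gen_sigma_def G_def[symmetric]
    using GP by simp
  have st: "sets (gen_sigma M X i) = sigma_sets (space M) G" unfolding gen_sigma_def G_def[symmetric]
    using GP by simp
  show "subalgebra M (gen_sigma M X i)" unfolding subalgebra_def
    using sp st sets.sigma_sets_subset[OF GM] by simp
  show "X i \<in> borel_measurable (gen_sigma M X i)"
  proof (rule measurableI)
    fix A :: "real set" assume "A \<in> sets borel"
    then have "X i -` A \<inter> space M \<in> G" unfolding G_def by blast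
    then show "X i -` A \<inter> space (gen_sigma M X i) \<in> sets (gen_sigma M X i)"
      using sp st by auto
  qed simp
qed

theorem lemma3p2:
  fixes M :: "'a measure" and X :: "nat \<Rightarrow> 'a \<Rightarrow> real"
    and k :: nat and x0 \<tau> :: real
  assumes "prob_space M"
    and "x0 > 1"
    and "\<forall>\<omega>\<in>space M. X 0 \<omega> = x0"
    and "\<forall>i\<le>k. X i \<in> borel_measurable M"
    and "\<forall>i\<le>k. AE \<omega> in M. X i \<omega> \<ge> 0"
    and "\<forall>i<k. AE \<omega> in M. X (Suc i) \<omega> - 1 \<ge> 2 * (X i \<omega> - 1)"
    and "\<forall>i<k. AE \<omega> in M.
           nn_cond_exp M (gen_sigma M X i) (\<lambda>\<omega>. ennreal (X (Suc i) \<omega>)) \<omega>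
             \<le> ennreal ((X i \<omega>)\<^sup>2)"
    and "\<tau> \<ge> 1 + 4 * (x0 - 1)"
  shows "measure M {\<omega> \<in> space M. X k \<omega> \<ge> \<tau> ^ (2 ^ k)}
           \<le> 48 * ((x0 - 1) / (\<tau> - 1))\<^sup>2"
proof -
  note P = assms(1) and x0 = assms(2) and X0 = assms(3) and meas = assms(4)
    and XY = assms(6) and CE = assms(7) and tau = assms(8)
  interpret prob_space M by (rule P)
  have t1: "\<tau> > 1" using x0 tau by simp
  define Aa where "Aa i = \<tau>^(2^i) - 1" for i :: nat
  have Apos: "Aa i > 0" for i unfolding Aa_def using t1 by (simp add: one_less_power)
  have Asuc: "Aa (Suc i) = Aa i * (Aa i + 2)" for i
  proof -
    have "\<tau>^(2^Suc i) = (\<tau>^(2^i))^2" by (simp add: power_mult[symmetric] mult.commute)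
    then show ?thesis unfolding Aa_def by (simp add: power2_eq_square algebra_simps)
  qed
  define phi where "phi i x = min 1 (((x - 1)/Aa i)^2)" for i :: nat and x :: real
  have ge1: "AE \<omega> in M. X i \<omega> \<ge> 1" if "i \<le> k" for i
    using that
  proof (induction i)
    case 0
    then show ?case using X0 x0 by (intro AE_I2) simp
  next
    case (Suc i)
    then have "AE \<omega> in M. X i \<omega> \<ge> 1" and "AE \<omega> in M. X (Suc i) \<omega> - 1 \<ge> 2 * (X i \<omega> - 1)"
      using XY by auto
    then show ?case by eventually_elim simp
  qed
  have main: "(\<integral>\<^sup>+\<omega>. ennreal (phi i (X i \<omega>)) \<partial>M) \<le> ennreal (phi 0 x0)" if "i \<le> k" for i
    using that
  proof (induction i)
    case 0
    have "(\<integral>\<^sup>+\<omega>. ennreal (phi 0 (X 0 \<omega>)) \<partial>M) = (\<integral>\<^sup>+\<omega>. ennreal (phi 0 x0) \<partial>M)"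
      using X0 by (intro nn_integral_cong) simp
    also have "\<dots> = ennreal (phi 0 x0)" by (simp add: emeasure_space_1)
    finally show ?case by simp
  next
    case (Suc i)
    have mj: "\<forall>j\<le>i. X j \<in> borel_measurable M" using meas Suc.prems by auto
    have "(\<integral>\<^sup>+\<omega>. ennreal (phi (Suc i) (X (Suc i) \<omega>)) \<partial>M) \<le> (\<integral>\<^sup>+\<omega>. ennreal (phi i (X i \<omega>)) \<partial>M)"
      unfolding phi_def Asuc
    proof (rule step[OF P gen_sigma_props(1)[OF mj] gen_sigma_props(2)[OF mj]])
      show "X (Suc i) \<in> borel_measurable M" using meas Suc.prems by auto
      show "AE \<omega> in M. 1 \<le> X i \<omega>" using ge1 Suc.prems by simp
      show "AE \<omega> in M. 2 * (X i \<omega> - 1) \<le> X (Suc i) \<omega> - 1" using XY Suc.prems by simp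
      show "AE \<omega> in M. nn_cond_exp M (gen_sigma M X i) (\<lambda>\<omega>. ennreal (X (Suc i) \<omega>)) \<omega> \<le> ennreal ((X i \<omega>)\<^sup>2)"
        using CE Suc.prems by simp
      show "0 < Aa i" by (rule Apos)
    qed
    also have "\<dots> \<le> ennreal (phi 0 x0)" using Suc by simp
    finally show ?case .
  qed
  let ?S = "{\<omega> \<in> space M. X k \<omega> \<ge> \<tau> ^ (2 ^ k)}"
  have mXk[measurable]: "X k \<in> borel_measurable M" using meas by simp
  have "emeasure M ?S = (\<integral>\<^sup>+\<omega>. indicator ?S \<omega> \<partial>M)" by (rule nn_integral_indicator[symmetric]) measurable
  also have "\<dots> \<le> (\<integral>\<^sup>+\<omega>. ennreal (phi k (X k \<omega>)) \<partial>M)"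
  proof (rule nn_integral_mono)
    fix \<omega> assume "\<omega> \<in> space M"
    show "indicator ?S \<omega> \<le> ennreal (phi k (X k \<omega>))"
    proof (cases "\<omega> \<in> ?S")
      case True
      then have "X k \<omega> - 1 \<ge> Aa k" unfolding Aa_def by simp
      then have "(X k \<omega> - 1)/Aa k \<ge> 1" using Apos[of k] by simp
      then have "((X k \<omega> - 1)/Aa k)^2 \<ge> 1" by (simp add: one_le_power)
      then have "phi k (X k \<omega>) = 1" unfolding phi_def by simp
      then show ?thesis using True by simp
    qed simp
  qed
  also have "\<dots> \<le> ennreal (phi 0 x0)" using main by simp
  finally have "measure M ?S \<le> phi 0 x0"
    by (simp add: emeasure_eq_measure ennreal_le_iff phi_def)
  also have "phi 0 x0 \<le> ((x0 - 1) / (\<tau> - 1))\<^sup>2" unfolding phi_def Aa_def by simp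
  also have "\<dots> \<le> 48 * ((x0 - 1) / (\<tau> - 1))\<^sup>2" by simp
  finally show ?thesis .
qed

end
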